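(* Let $I\subset\mathbb{R}$ be an interval and let $K,M,N\colon I^2\to I$ be arbitrary means. Then $K$ is the unique $(M,N)$-invariant mean if and only if the sequence of iterates $\big((M,N)^n\big)_{n\in\mathbb{N}}$ converges to $(K,K)$ pointwise on $I^2$.
   Context: A function $K\colon I^2\to\mathbb{R}$ is a mean in $I$ if $\min(x,y)\le K(x,y)\le\max(x,y)$ for all $x,y\in I$; no continuity is assumed. $(M,N)^n$ denotes the $n$-th iterate of the map $(x,y)\mapsto(M(x,y),N(x,y))$. A mean $K$ is $(M,N)$-invariant if $K(M(x,y),N(x,y))=K(x,y)$ for all $x,y\in I$. *)

theory Defs
  imports "HOL-Analysis.Analysis"
begin

definition is_mean :: "real set \<Rightarrow> (real \<Rightarrow> real \<Rightarrow> real) \<Rightarrow> bool" where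
  "is_mean I K \<longleftrightarrow> (\<forall>x\<in>I. \<forall>y\<in>I. min x y \<le> K x y \<and> K x y \<le> max x y)"

definition mean_iter :: "(real \<Rightarrow> real \<Rightarrow> real) \<Rightarrow> (real \<Rightarrow> real \<Rightarrow> real) \<Rightarrow> nat
    \<Rightarrow> real \<times> real \<Rightarrow> real \<times> real" where
  "mean_iter M N n = ((\<lambda>(x, y). (M x y, N x y)) ^^ n)"

definition invariant_mean :: "real set \<Rightarrow> (real \<Rightarrow> real \<Rightarrow> real) \<Rightarrow> (real \<Rightarrow> real \<Rightarrow> real)
    \<Rightarrow> (real \<Rightarrow> real \<Rightarrow> real) \<Rightarrow> bool" where
  "invariant_mean I M N K \<longleftrightarrow> (\<forall>x\<in>I. \<forall>y\<in>I. K (M x y) (N x y) = K x y)"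

end

theory Submission
  imports Defs
begin

lemma iter_Suc:
  "mean_iter M N (Suc n) p = mean_iter M N n (M (fst p) (snd p), N (fst p) (snd p))"
  unfolding mean_iter_def funpow_Suc_right comp_def by (cases p) simp

lemma iter_Suc2:
  "mean_iter M N (Suc n) p = (M (fst (mean_iter M N n p)) (snd (mean_iter M N n p)),
      N (fst (mean_iter M N n p)) (snd (mean_iter M N n p)))"
  unfolding mean_iter_def by (simp add: case_prod_beta)

lemma mean_in:
  assumes "is_interval I" "is_mean I M" "x \<in> I" "y \<in> I"
  shows "M x y \<in> I"
proof -
  have "min x y \<le> M x y" "M x y \<le> max x y" using assms(2-4) unfolding is_mean_def by auto
  moreover have "min x y \<in> I" "max x y \<in> I" using assms(3,4) by (auto simp: min_def max_def)
  ultimately show ?thesis using assms(1) unfolding is_interval_1 by blast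
qed

lemma iter_in:
  assumes "is_interval I" "is_mean I M" "is_mean I N" "x \<in> I" "y \<in> I"
  shows "fst (mean_iter M N n (x,y)) \<in> I \<and> snd (mean_iter M N n (x,y)) \<in> I"
proof (induction n)
  case 0 then show ?case using assms by (simp add: mean_iter_def)
next
  case (Suc n) then show ?case using assms mean_in[of I M] mean_in[of I N]
    by (simp add: iter_Suc2)
qed

lemma lo_mono:
  assumes "is_interval I" "is_mean I M" "is_mean I N" "x \<in> I" "y \<in> I"
  shows "min (fst (mean_iter M N n (x,y))) (snd (mean_iter M N n (x,y)))
     \<le> min (fst (mean_iter M N (Suc n) (x,y))) (snd (mean_iter M N (Suc n) (x,y)))
   \<and> max (fst (mean_iter M N (Suc n) (x,y))) (snd (mean_iter M N (Suc n) (x,y)))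
     \<le> max (fst (mean_iter M N n (x,y))) (snd (mean_iter M N n (x,y)))"
proof -
  obtain a b where ab: "mean_iter M N n (x,y) = (a,b)" by (cases "mean_iter M N n (x,y)")
  have "a \<in> I" "b \<in> I" using iter_in[OF assms, of n] ab by auto
  then have "min a b \<le> M a b" "M a b \<le> max a b" "min a b \<le> N a b" "N a b \<le> max a b"
    using assms(2,3) unfolding is_mean_def by auto
  then show ?thesis by (simp add: iter_Suc2 ab)
qed

theorem mainTheorem4:
  fixes I :: "real set" and K M N :: "real \<Rightarrow> real \<Rightarrow> real"
  assumes "is_interval I"
    and "is_mean I K" and "is_mean I M" and "is_mean I N"
  shows "(invariant_mean I M N K \<and>
          (\<forall>L. is_mean I L \<and> invariant_mean I M N L \<longrightarrow> (\<forall>x\<in>I. \<forall>y\<in>I. L x y = K x y)))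
     \<longleftrightarrow> (\<forall>x\<in>I. \<forall>y\<in>I. (\<lambda>n. mean_iter M N n (x, y)) \<longlonglongrightarrow> (K x y, K x y))"
proof -
  define it where "it = (\<lambda>x y n. mean_iter M N n (x,y))"
  define lo where "lo = (\<lambda>x y n. min (fst (it x y n)) (snd (it x y n)))"
  define hi where "hi = (\<lambda>x y n. max (fst (it x y n)) (snd (it x y n)))"
  have shift: "it (M x y) (N x y) n = it x y (Suc n)" for x y n
    unfolding it_def by (simp add: iter_Suc)
  have inc: "incseq (lo x y)" and dec: "decseq (hi x y)" if "x \<in> I" "y \<in> I" for x y
    using lo_mono[OF assms(1,3,4) that] unfolding lo_def hi_def it_def
    by (auto intro!: incseq_SucI decseq_SucI)
  have lohi: "lo x y n \<le> hi x y n" for x y n unfolding lo_def hi_def by simp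
  have lo0: "lo x y 0 = min x y" and hi0: "hi x y 0 = max x y" for x y
    unfolding lo_def hi_def it_def mean_iter_def by auto
  show ?thesis
  proof
    assume H: "invariant_mean I M N K \<and>
          (\<forall>L. is_mean I L \<and> invariant_mean I M N L \<longrightarrow> (\<forall>x\<in>I. \<forall>y\<in>I. L x y = K x y))"
    define Lo where "Lo = (\<lambda>x y. lim (lo x y))"
    define Hi where "Hi = (\<lambda>x y. lim (hi x y))"
    have loc: "lo x y \<longlonglongrightarrow> Lo x y" and hic: "hi x y \<longlonglongrightarrow> Hi x y" if "x \<in> I" "y \<in> I" for x y
    proof -
      have "lo x y n \<le> hi x y 0" for n
        using lohi[of x y n] decseqD[OF dec[OF that], of 0 n] by simp
      then have "bdd_above (range (lo x y))" by (intro bdd_aboveI[of _ "hi x y 0"]) auto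
      then have "convergent (lo x y)" using LIMSEQ_incseq_SUP inc[OF that] convergentI by blast
      then show "lo x y \<longlonglongrightarrow> Lo x y" unfolding Lo_def by (simp add: convergent_LIMSEQ_iff)
      have "lo x y 0 \<le> hi x y n" for n
        using lohi[of x y n] incseqD[OF inc[OF that], of 0 n] by simp
      then have "bdd_below (range (hi x y))" by (intro bdd_belowI[of _ "lo x y 0"]) auto
      then have "convergent (hi x y)" using LIMSEQ_decseq_INF dec[OF that] convergentI by blast
      then show "hi x y \<longlonglongrightarrow> Hi x y" unfolding Hi_def by (simp add: convergent_LIMSEQ_iff)
    qed
    have bounds: "min x y \<le> Lo x y \<and> Lo x y \<le> Hi x y \<and> Hi x y \<le> max x y"
      if "x \<in> I" "y \<in> I" for x y
    proof -
      have a: "lo x y 0 \<le> Lo x y" using incseq_le[OF inc[OF that] loc[OF that]] by blast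
      have b: "Hi x y \<le> hi x y 0" using decseq_ge[OF dec[OF that] hic[OF that]] by blast
      have c: "Lo x y \<le> Hi x y" using LIMSEQ_le[OF loc[OF that] hic[OF that]] lohi by blast
      show ?thesis using a b c lo0 hi0 by simp
    qed
    have Fin: "M x y \<in> I" "N x y \<in> I" if "x \<in> I" "y \<in> I" for x y
      using mean_in[OF assms(1,3) that] mean_in[OF assms(1,4) that] by auto
    have inv: "Lo (M x y) (N x y) = Lo x y \<and> Hi (M x y) (N x y) = Hi x y"
      if "x \<in> I" "y \<in> I" for x y
    proof -
      have e1: "lo (M x y) (N x y) = (\<lambda>n. lo x y (Suc n))"
        and e2: "hi (M x y) (N x y) = (\<lambda>n. hi x y (Suc n))"
        unfolding lo_def hi_def shift by auto
      have "lo (M x y) (N x y) \<longlonglongrightarrow> Lo x y" unfolding e1 using loc[OF that] by (rule LIMSEQ_Suc)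
      moreover have "hi (M x y) (N x y) \<longlonglongrightarrow> Hi x y" unfolding e2 using hic[OF that] by (rule LIMSEQ_Suc)
      ultimately show ?thesis using loc[OF Fin[OF that]] hic[OF Fin[OF that]] LIMSEQ_unique by blast
    qed
    have b2: "min x y \<le> Lo x y \<and> Lo x y \<le> max x y \<and> min x y \<le> Hi x y \<and> Hi x y \<le> max x y"
      if "x \<in> I" "y \<in> I" for x y using bounds[OF that] by linarith
    have "is_mean I Lo" "invariant_mean I M N Lo" "is_mean I Hi" "invariant_mean I M N Hi"
      unfolding is_mean_def invariant_mean_def using b2 inv by auto
    then have LoK: "Lo x y = K x y" and HiK: "Hi x y = K x y" if "x \<in> I" "y \<in> I" for x y
      using H that by blast+
    show "\<forall>x\<in>I. \<forall>y\<in>I. (\<lambda>n. mean_iter M N n (x, y)) \<longlonglongrightarrow> (K x y, K x y)"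
    proof (intro ballI)
      fix x y assume xy: "x \<in> I" "y \<in> I"
      have l: "lo x y \<longlonglongrightarrow> K x y" and h: "hi x y \<longlonglongrightarrow> K x y"
        using loc[OF xy] hic[OF xy] LoK[OF xy] HiK[OF xy] by auto
      have "(\<lambda>n. fst (it x y n)) \<longlonglongrightarrow> K x y"
        by (rule tendsto_sandwich[OF _ _ l h]) (auto simp: lo_def hi_def)
      moreover have "(\<lambda>n. snd (it x y n)) \<longlonglongrightarrow> K x y"
        by (rule tendsto_sandwich[OF _ _ l h]) (auto simp: lo_def hi_def)
      ultimately have "(\<lambda>n. (fst (it x y n), snd (it x y n))) \<longlonglongrightarrow> (K x y, K x y)"
        by (rule tendsto_Pair)
      then show "(\<lambda>n. mean_iter M N n (x, y)) \<longlonglongrightarrow> (K x y, K x y)" by (simp add: it_def)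
    qed
  next
    assume C: "\<forall>x\<in>I. \<forall>y\<in>I. (\<lambda>n. mean_iter M N n (x, y)) \<longlonglongrightarrow> (K x y, K x y)"
    have Fin: "M x y \<in> I" "N x y \<in> I" if "x \<in> I" "y \<in> I" for x y
      using mean_in[OF assms(1,3) that] mean_in[OF assms(1,4) that] by auto
    have Cit: "it x y \<longlonglongrightarrow> (K x y, K x y)" if "x \<in> I" "y \<in> I" for x y
      using C that unfolding it_def by blast
    have "invariant_mean I M N K" unfolding invariant_mean_def
    proof (intro ballI)
      fix x y assume xy: "x \<in> I" "y \<in> I"
      have "it (M x y) (N x y) \<longlonglongrightarrow> (K x y, K x y)"
        unfolding shift using LIMSEQ_Suc[OF Cit[OF xy]] by simp
      moreover have "it (M x y) (N x y) \<longlonglongrightarrow> (K (M x y) (N x y), K (M x y) (N x y))"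
        using Cit[OF Fin[OF xy]] .
      ultimately show "K (M x y) (N x y) = K x y" using LIMSEQ_unique by fastforce
    qed
    moreover have "\<forall>x\<in>I. \<forall>y\<in>I. L x y = K x y" if L: "is_mean I L" "invariant_mean I M N L" for L
    proof (intro ballI)
      fix x y assume xy: "x \<in> I" "y \<in> I"
      have itI: "fst (it x y n) \<in> I \<and> snd (it x y n) \<in> I" for n
        unfolding it_def using iter_in[OF assms(1,3,4) xy] by blast
      have Lc: "L (fst (it x y n)) (snd (it x y n)) = L x y" for n
      proof (induction n)
        case 0 then show ?case by (simp add: it_def mean_iter_def)
      next
        case (Suc n)
        have "it x y (Suc n) = (M (fst (it x y n)) (snd (it x y n)), N (fst (it x y n)) (snd (it x y n)))"
          unfolding it_def by (rule iter_Suc2)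
        then show ?case using Suc itI[of n] L(2) unfolding invariant_mean_def by simp
      qed
      have f: "(\<lambda>n. fst (it x y n)) \<longlonglongrightarrow> K x y" and s: "(\<lambda>n. snd (it x y n)) \<longlonglongrightarrow> K x y"
        using tendsto_fst[OF Cit[OF xy]] tendsto_snd[OF Cit[OF xy]] by auto
      have l: "lo x y \<longlonglongrightarrow> K x y" unfolding lo_def using tendsto_min[OF f s] by simp
      have h: "hi x y \<longlonglongrightarrow> K x y" unfolding hi_def using tendsto_max[OF f s] by simp
      have "(\<lambda>n. L x y) \<longlonglongrightarrow> K x y"
      proof (rule tendsto_sandwich[OF _ _ l h])
        have "lo x y n \<le> L x y \<and> L x y \<le> hi x y n" for n
        proof -
          have "min (fst (it x y n)) (snd (it x y n)) \<le> L (fst (it x y n)) (snd (it x y n))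
            \<and> L (fst (it x y n)) (snd (it x y n)) \<le> max (fst (it x y n)) (snd (it x y n))"
            using L(1) itI[of n] unfolding is_mean_def by blast
          then show ?thesis unfolding lo_def hi_def Lc .
        qed
        then show "\<forall>\<^sub>F n in sequentially. lo x y n \<le> L x y"
          "\<forall>\<^sub>F n in sequentially. L x y \<le> hi x y n" by auto
      qed
      then show "L x y = K x y" using LIMSEQ_unique tendsto_const by blast
    qed
    ultimately show "invariant_mean I M N K \<and>
          (\<forall>L. is_mean I L \<and> invariant_mean I M N L \<longrightarrow> (\<forall>x\<in>I. \<forall>y\<in>I. L x y = K x y))" by blast
  qed
qed

end
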